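(* Let $\mathscr A$ be an infinite dimensional abelian von Neumann algebra. Then there exist positive invertible operators in $\mathscr A$ that are not (complex) linear combinations of finitely many projections of $\mathscr A$. *)

theory Defs
  imports Complex_Main
begin

text \<open>There is no theory of complex Hilbert spaces in the available libraries, so we
  axiomatise a complex Hilbert space structure on an additive group 'a by a complex
  scalar multiplication sm and a complex inner product ip (linear in the second,
  conjugate linear in the first argument).\<close>

definition cnorm :: "('a \<Rightarrow> 'a \<Rightarrow> complex) \<Rightarrow> 'a \<Rightarrow> real" where
  "cnorm ip x = sqrt (Re (ip x x))"

definition complex_hilbert_space ::
  "(complex \<Rightarrow> 'a::ab_group_add \<Rightarrow> 'a) \<Rightarrow> ('a \<Rightarrow> 'a \<Rightarrow> complex) \<Rightarrow> bool" where
  "complex_hilbert_space sm ip \<longleftrightarrow>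
     (\<forall>a x y. sm a (x + y) = sm a x + sm a y) \<and>
     (\<forall>a b x. sm (a + b) x = sm a x + sm b x) \<and>
     (\<forall>a b x. sm a (sm b x) = sm (a * b) x) \<and>
     (\<forall>x. sm 1 x = x) \<and>
     (\<forall>x y z. ip x (y + z) = ip x y + ip x z) \<and>
     (\<forall>a x y. ip x (sm a y) = a * ip x y) \<and>
     (\<forall>x y. ip y x = cnj (ip x y)) \<and>
     (\<forall>x. Im (ip x x) = 0 \<and> Re (ip x x) \<ge> 0) \<and>
     (\<forall>x. ip x x = 0 \<longrightarrow> x = 0) \<and>
     (\<forall>X::nat \<Rightarrow> 'a.
        (\<forall>e>0. \<exists>N. \<forall>m\<ge>N. \<forall>n\<ge>N. cnorm ip (X m - X n) < e) \<longrightarrow>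
        (\<exists>L. \<forall>e>0. \<exists>N. \<forall>n\<ge>N. cnorm ip (X n - L) < e))"

definition bounded_op ::
  "(complex \<Rightarrow> 'a::ab_group_add \<Rightarrow> 'a) \<Rightarrow> ('a \<Rightarrow> 'a \<Rightarrow> complex) \<Rightarrow> ('a \<Rightarrow> 'a) \<Rightarrow> bool" where
  "bounded_op sm ip T \<longleftrightarrow>
     (\<forall>x y. T (x + y) = T x + T y) \<and>
     (\<forall>a x. T (sm a x) = sm a (T x)) \<and>
     (\<exists>K. \<forall>x. cnorm ip (T x) \<le> K * cnorm ip x)"

definition is_adjoint :: "('a \<Rightarrow> 'a \<Rightarrow> complex) \<Rightarrow> ('a \<Rightarrow> 'a) \<Rightarrow> ('a \<Rightarrow> 'a) \<Rightarrow> bool" where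
  "is_adjoint ip T S \<longleftrightarrow> (\<forall>x y. ip (T x) y = ip x (S y))"

definition commutant ::
  "(complex \<Rightarrow> 'a::ab_group_add \<Rightarrow> 'a) \<Rightarrow> ('a \<Rightarrow> 'a \<Rightarrow> complex) \<Rightarrow> ('a \<Rightarrow> 'a) set \<Rightarrow> ('a \<Rightarrow> 'a) set" where
  "commutant sm ip S = {T. bounded_op sm ip T \<and> (\<forall>A\<in>S. T \<circ> A = A \<circ> T)}"

definition von_neumann_algebra ::
  "(complex \<Rightarrow> 'a::ab_group_add \<Rightarrow> 'a) \<Rightarrow> ('a \<Rightarrow> 'a \<Rightarrow> complex) \<Rightarrow> ('a \<Rightarrow> 'a) set \<Rightarrow> bool" where
  "von_neumann_algebra sm ip M \<longleftrightarrow>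
     (\<forall>T\<in>M. bounded_op sm ip T) \<and>
     id \<in> M \<and>
     (\<forall>A\<in>M. \<forall>B\<in>M. (\<lambda>x. A x + B x) \<in> M) \<and>
     (\<forall>a. \<forall>A\<in>M. (\<lambda>x. sm a (A x)) \<in> M) \<and>
     (\<forall>A\<in>M. \<forall>B\<in>M. A \<circ> B \<in> M) \<and>
     (\<forall>A\<in>M. \<exists>S\<in>M. is_adjoint ip A S) \<and>
     commutant sm ip (commutant sm ip M) = M"

definition abelian_algebra :: "('a \<Rightarrow> 'a) set \<Rightarrow> bool" where
  "abelian_algebra M \<longleftrightarrow> (\<forall>A\<in>M. \<forall>B\<in>M. A \<circ> B = B \<circ> A)"

definition lin_comb_of ::
  "(complex \<Rightarrow> 'a::ab_group_add \<Rightarrow> 'a) \<Rightarrow> ('a \<Rightarrow> 'a) set \<Rightarrow> ('a \<Rightarrow> 'a) \<Rightarrow> bool" where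
  "lin_comb_of sm S T \<longleftrightarrow>
     (\<exists>F c. finite F \<and> F \<subseteq> S \<and> T = (\<lambda>x. \<Sum>P\<in>F. sm (c P) (P x)))"

definition infinite_dimensional ::
  "(complex \<Rightarrow> 'a::ab_group_add \<Rightarrow> 'a) \<Rightarrow> ('a \<Rightarrow> 'a) set \<Rightarrow> bool" where
  "infinite_dimensional sm M \<longleftrightarrow>
     \<not> (\<exists>F. finite F \<and> F \<subseteq> M \<and> (\<forall>T\<in>M. lin_comb_of sm F T))"

definition positive_op :: "('a \<Rightarrow> 'a \<Rightarrow> complex) \<Rightarrow> ('a \<Rightarrow> 'a) \<Rightarrow> bool" where
  "positive_op ip T \<longleftrightarrow> (\<forall>x. Im (ip x (T x)) = 0 \<and> Re (ip x (T x)) \<ge> 0)"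

definition invertible_op ::
  "(complex \<Rightarrow> 'a::ab_group_add \<Rightarrow> 'a) \<Rightarrow> ('a \<Rightarrow> 'a \<Rightarrow> complex) \<Rightarrow> ('a \<Rightarrow> 'a) \<Rightarrow> bool" where
  "invertible_op sm ip T \<longleftrightarrow> (\<exists>S. bounded_op sm ip S \<and> S \<circ> T = id \<and> T \<circ> S = id)"

definition projections_of :: "('a \<Rightarrow> 'a \<Rightarrow> complex) \<Rightarrow> ('a \<Rightarrow> 'a) set \<Rightarrow> ('a \<Rightarrow> 'a) set" where
  "projections_of ip M = {P\<in>M. P \<circ> P = P \<and> is_adjoint ip P P}"

end

theory Submission
  imports Defs
begin

lemma squeeze0:
  fixes f g :: "nat \<Rightarrow> real"
  assumes "\<And>n. 0 \<le> f n" "\<And>n. f n \<le> g n" "g \<longlonglongrightarrow> 0"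
  shows "f \<longlonglongrightarrow> 0"
  by (rule real_tendsto_sandwich[of "\<lambda>n. 0" f sequentially g]) (use assms in auto)

locale chs =
  fixes sm :: "complex \<Rightarrow> 'a::ab_group_add \<Rightarrow> 'a"
    and ip :: "'a \<Rightarrow> 'a \<Rightarrow> complex"
  assumes H: "complex_hilbert_space sm ip"
begin

lemmas HD = H[unfolded complex_hilbert_space_def]

lemma sm_add: "sm a (x + y) = sm a x + sm a y"
  using conjunct1[OF HD] by blast
lemma sm_ladd: "sm (a + b) x = sm a x + sm b x"
  using conjunct1[OF conjunct2[OF HD]] by blast
lemma sm_sm: "sm a (sm b x) = sm (a * b) x"
  using conjunct1[OF conjunct2[OF conjunct2[OF HD]]] by blast
lemma sm_one[simp]: "sm 1 x = x"
  using conjunct1[OF conjunct2[OF conjunct2[OF conjunct2[OF HD]]]] by blast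
lemma ip_add: "ip x (y + z) = ip x y + ip x z"
  using conjunct1[OF conjunct2[OF conjunct2[OF conjunct2[OF conjunct2[OF HD]]]]] by blast
lemma ip_sm: "ip x (sm a y) = a * ip x y"
  using conjunct1[OF conjunct2[OF conjunct2[OF conjunct2[OF conjunct2[OF conjunct2[OF HD]]]]]] by blast
lemma ip_cnj: "ip y x = cnj (ip x y)"
  using conjunct1[OF conjunct2[OF conjunct2[OF conjunct2[OF conjunct2[OF conjunct2[OF conjunct2[OF HD]]]]]]] by blast
lemma ip_self_Im: "Im (ip x x) = 0"
  using conjunct1[OF conjunct2[OF conjunct2[OF conjunct2[OF conjunct2[OF conjunct2[OF conjunct2[OF conjunct2[OF HD]]]]]]]] by blast
lemma ip_self_Re: "Re (ip x x) \<ge> 0"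
  using conjunct1[OF conjunct2[OF conjunct2[OF conjunct2[OF conjunct2[OF conjunct2[OF conjunct2[OF conjunct2[OF HD]]]]]]]] by blast
lemma ip_self_zero: "ip x x = 0 \<Longrightarrow> x = 0"
  using conjunct1[OF conjunct2[OF conjunct2[OF conjunct2[OF conjunct2[OF conjunct2[OF conjunct2[OF conjunct2[OF conjunct2[OF HD]]]]]]]]] by blast
lemma complete: "(\<forall>e>0. \<exists>N. \<forall>m\<ge>N. \<forall>n\<ge>N. cnorm ip ((X::nat\<Rightarrow>'a) m - X n) < e) \<Longrightarrow>
        (\<exists>L. \<forall>e>0. \<exists>N. \<forall>n\<ge>N. cnorm ip (X n - L) < e)"
  using conjunct2[OF conjunct2[OF conjunct2[OF conjunct2[OF conjunct2[OF conjunct2[OF conjunct2[OF conjunct2[OF conjunct2[OF HD]]]]]]]]] by blast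

lemma sm_zero[simp]: "sm a 0 = 0"
  using sm_add[of a 0 0] by simp
lemma sm_zero_left[simp]: "sm 0 x = 0"
  using sm_ladd[of 0 0 x] by simp
lemma sm_minus: "sm a (- x) = - sm a x"
  using sm_add[of a x "-x"] by (simp add: eq_neg_iff_add_eq_0 add.commute)
lemma sm_diff: "sm a (x - y) = sm a x - sm a y"
  using sm_add[of a x "-y"] by (simp add: sm_minus)
lemma sm_lminus: "sm (- a) x = - sm a x"
  using sm_ladd[of a "-a" x] by (simp add: eq_neg_iff_add_eq_0 add.commute)
lemma sm_ldiff: "sm (a - b) x = sm a x - sm b x"
  using sm_ladd[of a "-b" x] by (simp add: sm_lminus)
lemma sm_sum: "sm a (\<Sum>i\<in>A. f i) = (\<Sum>i\<in>A. sm a (f i))"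
  by (induction A rule: infinite_finite_induct) (auto simp: sm_add)
lemma sm_lsum: "sm (\<Sum>i\<in>A. f i) x = (\<Sum>i\<in>A. sm (f i) x)"
  by (induction A rule: infinite_finite_induct) (auto simp: sm_ladd)

lemma ip_zero[simp]: "ip x 0 = 0"
  using ip_add[of x 0 0] by simp
lemma ip_zero_left[simp]: "ip 0 x = 0"
  using ip_cnj[of 0 x] by simp
lemma ip_minus: "ip x (- y) = - ip x y"
  using ip_add[of x y "-y"] by (simp add: eq_neg_iff_add_eq_0 add.commute)
lemma ip_diff: "ip x (y - z) = ip x y - ip x z"
  using ip_add[of x y "-z"] by (simp add: ip_minus)
lemma ip_add_left: "ip (x + y) z = ip x z + ip y z"
  by (metis ip_cnj ip_add complex_cnj_add)
lemma ip_diff_left: "ip (x - y) z = ip x z - ip y z"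
  by (metis ip_cnj ip_diff complex_cnj_diff)
lemma ip_sm_left: "ip (sm a x) y = cnj a * ip x y"
  by (metis ip_cnj ip_sm complex_cnj_mult)

lemma ip_self_real: "ip x x = complex_of_real (Re (ip x x))"
  using ip_self_Im[of x] by (simp add: complex_eq_iff)

lemma cnorm_nonneg[simp]: "cnorm ip x \<ge> 0"
  by (simp add: cnorm_def ip_self_Re)
lemma cnorm_sq: "(cnorm ip x)^2 = Re (ip x x)"
  using ip_self_Re[of x] by (simp add: cnorm_def)
lemma cnorm_zero_iff[simp]: "cnorm ip x = 0 \<longleftrightarrow> x = 0"
proof
  assume "cnorm ip x = 0"
  then have "Re (ip x x) = 0" using ip_self_Re[of x] by (simp add: cnorm_def)
  then have "ip x x = 0" using ip_self_real[of x] by simp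
  then show "x = 0" by (rule ip_self_zero)
qed (simp add: cnorm_def)
lemma cnorm_zero[simp]: "cnorm ip 0 = 0" by simp

lemma cnorm_sm: "cnorm ip (sm a x) = cmod a * cnorm ip x"
proof -
  have "ip (sm a x) (sm a x) = (cnj a * a) * ip x x"
    by (simp add: ip_sm ip_sm_left)
  also have "cnj a * a = complex_of_real ((cmod a)^2)"
    by (metis complex_norm_square mult.commute of_real_power)
  finally have "Re (ip (sm a x) (sm a x)) = (cmod a)^2 * Re (ip x x)"
    by simp
  then have "(cnorm ip (sm a x))^2 = (cmod a * cnorm ip x)^2"
    by (simp add: cnorm_sq power_mult_distrib)
  then show ?thesis
    by (simp add: power2_eq_iff_nonneg)
qed

lemma cnorm_minus: "cnorm ip (- x) = cnorm ip x"
  using cnorm_sm[of "-1" x] by (simp add: sm_lminus)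
lemma cnorm_commute: "cnorm ip (x - y) = cnorm ip (y - x)"
  using cnorm_minus[of "x - y"] by simp

lemma cauchy_schwarz: "cmod (ip x y) \<le> cnorm ip x * cnorm ip y"
proof (cases "x = 0")
  case True then show ?thesis by simp
next
  case False
  define r where "r = Re (ip x x)"
  define a where "a = ip x y"
  have rpos: "r > 0"
    using False ip_self_Re[of x] ip_self_real[of x] ip_self_zero[of x] r_def
    by (metis less_eq_real_def of_real_0)
  have rr: "ip x x = complex_of_real r" using ip_self_real r_def by simp
  define v where "v = sm (complex_of_real r) y - sm a x"
  have "ip v v = complex_of_real (r * r) * ip y y - complex_of_real r * a * ip y x
          - cnj a * complex_of_real r * ip x y + cnj a * a * ip x x"
    unfolding v_def by (simp add: ip_diff ip_diff_left ip_sm ip_sm_left algebra_simps)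
  also have "\<dots> = complex_of_real (r * r) * ip y y - complex_of_real r * (a * cnj a)"
    using rr by (simp add: a_def ip_cnj[of y x] algebra_simps)
  also have "a * cnj a = complex_of_real ((cmod a)^2)"
    by (metis complex_norm_square of_real_power)
  finally have "ip v v = complex_of_real (r * r) * ip y y - complex_of_real (r * (cmod a)^2)"
    by simp
  then have "Re (ip v v) = r * r * Re (ip y y) - r * (cmod a)^2"
    by simp
  with ip_self_Re[of v] have "r * (cmod a)^2 \<le> r * (r * Re (ip y y))"
    by (simp add: algebra_simps)
  then have "(cmod a)^2 \<le> r * Re (ip y y)" using rpos by simp
  also have "\<dots> = (cnorm ip x * cnorm ip y)^2"
    by (simp add: r_def cnorm_sq power_mult_distrib)
  finally show ?thesis unfolding a_def
    by (rule power2_le_imp_le) simp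
qed

lemma cnorm_triangle: "cnorm ip (x + y) \<le> cnorm ip x + cnorm ip y"
proof -
  have "Re (ip (x + y) (x + y)) = Re (ip x x) + Re (ip y y) + (Re (ip x y) + Re (ip y x))"
    by (simp add: ip_add ip_add_left)
  also have "Re (ip y x) = Re (ip x y)" by (subst ip_cnj) simp
  finally have e: "(cnorm ip (x + y))^2 = (cnorm ip x)^2 + (cnorm ip y)^2 + 2 * Re (ip x y)"
    by (simp add: cnorm_sq)
  have "Re (ip x y) \<le> cnorm ip x * cnorm ip y"
    using complex_Re_le_cmod[of "ip x y"] cauchy_schwarz[of x y] by linarith
  then have "(cnorm ip (x + y))^2 \<le> (cnorm ip x + cnorm ip y)^2"
    unfolding e by (simp add: power2_sum)
  then show ?thesis by (rule power2_le_imp_le) simp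
qed

lemma cnorm_triangle_diff: "cnorm ip (x - z) \<le> cnorm ip (x - y) + cnorm ip (y - z)"
  using cnorm_triangle[of "x - y" "y - z"] by simp

lemma cnorm_sum: "cnorm ip (\<Sum>i\<in>A. f i) \<le> (\<Sum>i\<in>A. cnorm ip (f i))"
proof (induction A rule: infinite_finite_induct)
  case (insert a A)
  then show ?case using cnorm_triangle[of "f a" "sum f A"] by simp
qed auto


definition lin :: "('a \<Rightarrow> 'a) \<Rightarrow> bool" where
  "lin T \<longleftrightarrow> (\<forall>x y. T (x + y) = T x + T y) \<and> (\<forall>a x. T (sm a x) = sm a (T x))"

lemma linI: "(\<And>x y. T (x + y) = T x + T y) \<Longrightarrow> (\<And>a x. T (sm a x) = sm a (T x)) \<Longrightarrow> lin T"
  by (simp add: lin_def)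
lemma lin_add: "lin T \<Longrightarrow> T (x + y) = T x + T y" by (simp add: lin_def)
lemma lin_sm: "lin T \<Longrightarrow> T (sm a x) = sm a (T x)" by (simp add: lin_def)
lemma lin_zero: "lin T \<Longrightarrow> T 0 = 0"
  using lin_add[of T 0 0] by simp
lemma lin_minus: "lin T \<Longrightarrow> T (- x) = - T x"
  using lin_add[of T x "-x"] lin_zero[of T] by (simp add: eq_neg_iff_add_eq_0 add.commute)
lemma lin_diff: "lin T \<Longrightarrow> T (x - y) = T x - T y"
  using lin_add[of T x "-y"] lin_minus[of T y] by simp
lemma lin_sum: "lin T \<Longrightarrow> T (\<Sum>i\<in>A. f i) = (\<Sum>i\<in>A. T (f i))"
  by (induction A rule: infinite_finite_induct) (auto simp: lin_add lin_zero)

lemma bounded_lin: "bounded_op sm ip T \<Longrightarrow> lin T"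
  by (simp add: bounded_op_def lin_def)
lemma bounded_K: "bounded_op sm ip T \<Longrightarrow> \<exists>K\<ge>0. \<forall>x. cnorm ip (T x) \<le> K * cnorm ip x"
proof -
  assume "bounded_op sm ip T"
  then obtain K where K: "\<forall>x. cnorm ip (T x) \<le> K * cnorm ip x" by (auto simp: bounded_op_def)
  have "\<forall>x. cnorm ip (T x) \<le> max K 0 * cnorm ip x"
  proof
    fix x show "cnorm ip (T x) \<le> max K 0 * cnorm ip x"
      using K[rule_format, of x] mult_right_mono[of K "max K 0" "cnorm ip x"] by simp
  qed
  then show ?thesis by (intro exI[of _ "max K 0"]) simp
qed
lemma bounded_opI: "lin T \<Longrightarrow> (\<And>x. cnorm ip (T x) \<le> K * cnorm ip x) \<Longrightarrow> bounded_op sm ip T"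
  by (auto simp: bounded_op_def lin_def)

definition conv :: "(nat \<Rightarrow> 'a) \<Rightarrow> 'a \<Rightarrow> bool" where
  "conv X L \<longleftrightarrow> (\<lambda>n. cnorm ip (X n - L)) \<longlonglongrightarrow> 0"

lemma conv_unique: assumes "conv X L" "conv X L'" shows "L = L'"
proof -
  have t: "(\<lambda>n. cnorm ip (X n - L) + cnorm ip (X n - L')) \<longlonglongrightarrow> 0"
    using tendsto_add[OF assms[unfolded conv_def]] by simp
  have "\<forall>n. cnorm ip (L - L') \<le> cnorm ip (X n - L) + cnorm ip (X n - L')"
    using cnorm_triangle_diff[of L L' "X _"] cnorm_commute[of L "X _"] by metis
  then have "cnorm ip (L - L') \<le> 0"
    by (intro LIMSEQ_le_const[OF t]) auto
  then show ?thesis using cnorm_nonneg[of "L - L'"] by simp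
qed

lemma conv_add: assumes "conv X L" "conv Y M" shows "conv (\<lambda>n. X n + Y n) (L + M)"
  unfolding conv_def
proof (rule squeeze0)
  show "(\<lambda>n. cnorm ip (X n - L) + cnorm ip (Y n - M)) \<longlonglongrightarrow> 0"
    using tendsto_add[OF assms[unfolded conv_def]] by simp
  fix n show "cnorm ip (X n + Y n - (L + M)) \<le> cnorm ip (X n - L) + cnorm ip (Y n - M)"
    using cnorm_triangle[of "X n - L" "Y n - M"] by (simp add: algebra_simps)
qed simp

lemma conv_const: "conv (\<lambda>n. L) L"
  by (simp add: conv_def)

lemma conv_sm: assumes "conv X L" shows "conv (\<lambda>n. sm a (X n)) (sm a L)"
proof -
  have "(\<lambda>n. cmod a * cnorm ip (X n - L)) \<longlonglongrightarrow> 0"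
    using tendsto_mult_right_zero[OF assms[unfolded conv_def]] by simp
  then show ?thesis by (simp add: conv_def sm_diff[symmetric] cnorm_sm)
qed

lemma conv_op: assumes "bounded_op sm ip T" "conv X L" shows "conv (\<lambda>n. T (X n)) (T L)"
proof -
  obtain K where K: "K \<ge> 0" "\<forall>x. cnorm ip (T x) \<le> K * cnorm ip x"
    using bounded_K[OF assms(1)] by blast
  have l: "lin T" using assms(1) by (rule bounded_lin)
  show ?thesis unfolding conv_def
  proof (rule squeeze0)
    show "(\<lambda>n. K * cnorm ip (X n - L)) \<longlonglongrightarrow> 0"
      using tendsto_mult_right_zero[OF assms(2)[unfolded conv_def]] by simp
    fix n show "cnorm ip (T (X n) - T L) \<le> K * cnorm ip (X n - L)"
      using K(2) lin_diff[OF l, of "X n" L, symmetric] by metis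
  qed simp
qed

lemma conv_cong_ev: assumes "conv Y L" "\<And>n. n \<ge> N \<Longrightarrow> X n = Y n" shows "conv X L"
proof -
  have "(\<lambda>n. cnorm ip (Y (n + N) - L)) \<longlonglongrightarrow> 0"
    using assms(1) unfolding conv_def by (rule LIMSEQ_ignore_initial_segment)
  then have "(\<lambda>n. cnorm ip (X (n + N) - L)) \<longlonglongrightarrow> 0" using assms(2) by simp
  then show ?thesis unfolding conv_def by (rule LIMSEQ_offset)
qed

lemma conv_Suc: "conv X L \<Longrightarrow> conv (\<lambda>n. X (Suc n)) L"
  unfolding conv_def by (rule LIMSEQ_Suc)

lemma conv_bound: assumes "conv X L" "\<And>n. cnorm ip (X n) \<le> B" shows "cnorm ip L \<le> B"
proof -
  have t: "(\<lambda>n. B + cnorm ip (X n - L)) \<longlonglongrightarrow> B"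
    using tendsto_add[OF tendsto_const assms(1)[unfolded conv_def]] by simp
  have "\<forall>n. cnorm ip L \<le> B + cnorm ip (X n - L)"
  proof
    fix n
    have "cnorm ip L \<le> cnorm ip (X n) + cnorm ip (L - X n)"
      using cnorm_triangle[of "X n" "L - X n"] by simp
    then show "cnorm ip L \<le> B + cnorm ip (X n - L)"
      using assms(2)[of n] cnorm_commute[of L "X n"] by simp
  qed
  then show ?thesis by (intro LIMSEQ_le_const[OF t]) auto
qed

lemma conv_exists:
  assumes "\<And>e. e > 0 \<Longrightarrow> \<exists>N. \<forall>m\<ge>N. \<forall>n\<ge>N. cnorm ip (X m - X n) < e"
  shows "\<exists>L. conv X L"
proof -
  obtain L where L: "\<forall>e>0. \<exists>N. \<forall>n\<ge>N. cnorm ip (X n - L) < e"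
    using complete[of X] assms by blast
  have "(\<lambda>n. cnorm ip (X n - L)) \<longlonglongrightarrow> 0"
    unfolding LIMSEQ_def dist_real_def using L by simp
  then show ?thesis unfolding conv_def by blast
qed


lemma sum_split_lessThan: "n \<le> m \<Longrightarrow> sum f {..<m::nat} = sum f {..<n} + sum f {n..<m}"
  by (induction m rule: dec_induct) (simp_all add: sum.atLeastLessThan_Suc add.assoc)

lemma series:
  assumes lU: "\<And>k. lin (U k)" and b: "\<And>k x. cnorm ip (U k x) \<le> a k * cnorm ip x"
    and a0: "\<And>k. a k \<ge> 0" and s: "summable a"
  shows "\<exists>S. bounded_op sm ip S \<and> (\<forall>x. conv (\<lambda>n. \<Sum>k<n. U k x) (S x))"
proof -
  define P where "P x n = (\<Sum>k<n. U k x)" for x n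
  have ex: "\<exists>L. conv (P x) L" for x
  proof (rule conv_exists)
    fix e :: real assume e: "e > 0"
    define d where "d = e / (cnorm ip x + 1)"
    have d: "d > 0" using e by (simp add: d_def add_nonneg_pos)
    obtain N where N: "\<forall>m\<ge>N. \<forall>n. norm (sum a {m..<n}) < d"
      using s[unfolded summable_Cauchy] d by blast
    have key: "cnorm ip (P x m - P x n) < e" if "N \<le> n" "n \<le> m" for m n
    proof -
      have "P x m - P x n = (\<Sum>k\<in>{n..<m}. U k x)"
        unfolding P_def using sum_split_lessThan[OF that(2), of "\<lambda>k. U k x"] by (simp add: algebra_simps)
      then have "cnorm ip (P x m - P x n) \<le> (\<Sum>k\<in>{n..<m}. cnorm ip (U k x))"
        using cnorm_sum by simp
      also have "\<dots> \<le> (\<Sum>k\<in>{n..<m}. a k * cnorm ip x)"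
        by (intro sum_mono b)
      also have "\<dots> = sum a {n..<m} * cnorm ip x" by (simp add: sum_distrib_right)
      also have "\<dots> \<le> d * cnorm ip x"
      proof -
        have "sum a {n..<m} \<ge> 0" by (intro sum_nonneg a0)
        then have "sum a {n..<m} < d" using N[rule_format, OF that(1), of m] by simp
        then show ?thesis by (intro mult_right_mono) auto
      qed
      also have "\<dots> < e"
      proof -
        have "d * cnorm ip x = e * (cnorm ip x / (cnorm ip x + 1))" by (simp add: d_def)
        also have "\<dots> < e * 1"
          using e by (intro mult_strict_left_mono) (auto simp: add_nonneg_pos)
        finally show ?thesis by simp
      qed
      finally show ?thesis .
    qed
    show "\<exists>N. \<forall>m\<ge>N. \<forall>n\<ge>N. cnorm ip (P x m - P x n) < e"
    proof (intro exI allI impI)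
      fix m n assume "N \<le> m" "N \<le> n"
      then show "cnorm ip (P x m - P x n) < e"
        using key[of n m] key[of m n] cnorm_commute[of "P x m" "P x n"]
        by (cases "n \<le> m") auto
    qed
  qed
  define S where "S x = (SOME L. conv (P x) L)" for x
  have cS: "conv (P x) (S x)" for x
    unfolding S_def using ex[of x] by (rule someI_ex)
  have "lin S"
  proof (rule linI)
    fix x y
    have "P (x + y) = (\<lambda>n. P x n + P y n)"
      by (auto simp: P_def lin_add[OF lU] sum.distrib)
    then have "conv (P (x + y)) (S x + S y)" using conv_add[OF cS cS] by simp
    then show "S (x + y) = S x + S y" using cS conv_unique by blast
  next
    fix c x
    have "P (sm c x) = (\<lambda>n. sm c (P x n))"
      by (auto simp: P_def lin_sm[OF lU] sm_sum)
    then have "conv (P (sm c x)) (sm c (S x))" using conv_sm[OF cS] by simp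
    then show "S (sm c x) = sm c (S x)" using cS conv_unique by blast
  qed
  moreover have "cnorm ip (S x) \<le> suminf a * cnorm ip x" for x
  proof (rule conv_bound[OF cS])
    fix n
    have "cnorm ip (P x n) \<le> (\<Sum>k<n. cnorm ip (U k x))" unfolding P_def by (rule cnorm_sum)
    also have "\<dots> \<le> (\<Sum>k<n. a k * cnorm ip x)" by (intro sum_mono b)
    also have "\<dots> = sum a {..<n} * cnorm ip x" by (simp add: sum_distrib_right)
    also have "\<dots> \<le> suminf a * cnorm ip x"
      by (intro mult_right_mono sum_le_suminf s) (auto simp: a0)
    finally show "cnorm ip (P x n) \<le> suminf a * cnorm ip x" .
  qed
  ultimately show ?thesis using cS unfolding P_def by (blast intro: bounded_opI)
qed

lemma lin_funpow: "lin L \<Longrightarrow> lin (L ^^ k)"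
  by (induction k) (auto simp: lin_def)

lemma neumann:
  assumes lL: "lin L" and bL: "\<And>x. cnorm ip (L x) \<le> q * cnorm ip x" and q: "0 \<le> q" "q < 1"
  shows "\<exists>S. bounded_op sm ip S \<and> (\<forall>x. S x - L (S x) = x) \<and> (\<forall>x. S (x - L x) = x)"
proof -
  have bk: "cnorm ip ((L ^^ k) x) \<le> q ^ k * cnorm ip x" for k x
  proof (induction k)
    case (Suc k)
    have "cnorm ip ((L ^^ Suc k) x) \<le> q * cnorm ip ((L ^^ k) x)" using bL by simp
    also have "\<dots> \<le> q * (q ^ k * cnorm ip x)" using Suc q by (intro mult_left_mono) auto
    finally show ?case by simp
  qed simp
  have sq: "summable (\<lambda>k. q ^ k)" using q by (intro summable_geometric) simp
  obtain S where S: "bounded_op sm ip S" "\<forall>x. conv (\<lambda>n. \<Sum>k<n. (L ^^ k) x) (S x)"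
    using series[of "\<lambda>k. L ^^ k" "\<lambda>k. q ^ k"] lin_funpow[OF lL] bk q sq by auto
  have bLo: "bounded_op sm ip L" using lL bL by (rule bounded_opI)
  have 1: "S x - L (S x) = x" for x
  proof -
    have "conv (\<lambda>n. L (\<Sum>k<n. (L ^^ k) x)) (L (S x))"
      using conv_op[OF bLo] S(2) by blast
    moreover have "(\<lambda>n. L (\<Sum>k<n. (L ^^ k) x)) = (\<lambda>n. (\<Sum>k<Suc n. (L ^^ k) x) + - x)"
    proof
      fix n
      have "L (\<Sum>k<n. (L ^^ k) x) = (\<Sum>k<n. (L ^^ Suc k) x)"
        by (simp add: lin_sum[OF lL])
      also have "\<dots> = (\<Sum>k<Suc n. (L ^^ k) x) + - x"
        by (simp only: sum.lessThan_Suc_shift) simp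
      finally show "L (\<Sum>k<n. (L ^^ k) x) = (\<Sum>k<Suc n. (L ^^ k) x) + - x" .
    qed
    moreover have "conv (\<lambda>n. (\<Sum>k<Suc n. (L ^^ k) x) + - x) (S x + - x)"
      using conv_add[OF conv_Suc[OF S(2)[rule_format, of x]] conv_const] .
    ultimately have "L (S x) = S x + - x" using conv_unique by metis
    then show ?thesis by simp
  qed
  have 2: "S (x - L x) = x" for x
  proof -
    have "(\<lambda>n. \<Sum>k<n. (L ^^ k) (x - L x)) = (\<lambda>n. x - (L ^^ n) x)"
    proof
      fix n
      have "(\<Sum>k<n. (L ^^ k) (x - L x)) = (\<Sum>k<n. (L ^^ k) x - (L ^^ Suc k) x)"
        by (intro sum.cong refl) (simp add: lin_diff[OF lin_funpow[OF lL]] funpow_swap1)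
      also have "\<dots> = x - (L ^^ n) x" by (subst sum_lessThan_telescope') simp
      finally show "(\<Sum>k<n. (L ^^ k) (x - L x)) = x - (L ^^ n) x" .
    qed
    moreover have "conv (\<lambda>n. x - (L ^^ n) x) x"
      unfolding conv_def
    proof (rule squeeze0)
      show "(\<lambda>n. q ^ n * cnorm ip x) \<longlonglongrightarrow> 0"
        using q by (intro tendsto_mult_left_zero LIMSEQ_power_zero) auto
      fix n show "cnorm ip (x - (L ^^ n) x - x) \<le> q ^ n * cnorm ip x"
        using bk[of n x] cnorm_minus[of "(L ^^ n) x"] by simp
    qed simp
    ultimately show ?thesis using S(2) conv_unique by metis
  qed
  show ?thesis using S(1) 1 2 by blast
qed


lemma lc_mem: "P \<in> S \<Longrightarrow> lin_comb_of sm S P"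
  unfolding lin_comb_of_def by (intro exI[of _ "{P}"] exI[of _ "\<lambda>_. 1"]) auto

lemma lc_ext: assumes "lin_comb_of sm S A" "\<And>x. B x = A x" shows "lin_comb_of sm S B"
proof -
  have "B = A" using assms(2) by (rule ext)
  then show ?thesis using assms(1) by simp
qed

lemma lc_add: assumes "lin_comb_of sm S A" "lin_comb_of sm S B"
  shows "lin_comb_of sm S (\<lambda>x. A x + B x)"
proof -
  obtain F1 c1 where 1: "finite F1" "F1 \<subseteq> S" "A = (\<lambda>x. \<Sum>P\<in>F1. sm (c1 P) (P x))"
    using assms(1) unfolding lin_comb_of_def by blast
  obtain F2 c2 where 2: "finite F2" "F2 \<subseteq> S" "B = (\<lambda>x. \<Sum>P\<in>F2. sm (c2 P) (P x))"
    using assms(2) unfolding lin_comb_of_def by blast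
  define F where "F = F1 \<union> F2"
  define c where "c P = (if P \<in> F1 then c1 P else 0) + (if P \<in> F2 then c2 P else 0)" for P
  have fF: "finite F" using 1 2 by (simp add: F_def)
  have "A x + B x = (\<Sum>P\<in>F. sm (c P) (P x))" for x
  proof -
    have e1: "(\<Sum>P\<in>F. sm (if P \<in> F1 then c1 P else 0) (P x)) = A x"
    proof -
      have "(\<Sum>P\<in>F. sm (if P \<in> F1 then c1 P else 0) (P x))
          = (\<Sum>P\<in>F. if P \<in> F1 then sm (c1 P) (P x) else 0)"
        by (intro sum.cong) auto
      also have "\<dots> = (\<Sum>P\<in>F \<inter> F1. sm (c1 P) (P x))"
        using sum.inter_restrict[OF fF, symmetric] by simp
      also have "F \<inter> F1 = F1" by (auto simp: F_def)
      finally show ?thesis using 1 by simp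
    qed
    have e2: "(\<Sum>P\<in>F. sm (if P \<in> F2 then c2 P else 0) (P x)) = B x"
    proof -
      have "(\<Sum>P\<in>F. sm (if P \<in> F2 then c2 P else 0) (P x))
          = (\<Sum>P\<in>F. if P \<in> F2 then sm (c2 P) (P x) else 0)"
        by (intro sum.cong) auto
      also have "\<dots> = (\<Sum>P\<in>F \<inter> F2. sm (c2 P) (P x))"
        using sum.inter_restrict[OF fF, symmetric] by simp
      also have "F \<inter> F2 = F2" by (auto simp: F_def)
      finally show ?thesis using 2 by simp
    qed
    show ?thesis unfolding c_def sm_ladd sum.distrib e1 e2 ..
  qed
  then show ?thesis unfolding lin_comb_of_def using fF 1 2 F_def
    by (intro exI[of _ F] exI[of _ c]) auto
qed

lemma lc_sm: assumes "lin_comb_of sm S A" shows "lin_comb_of sm S (\<lambda>x. sm a (A x))"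
proof -
  obtain F c where 1: "finite F" "F \<subseteq> S" "A = (\<lambda>x. \<Sum>P\<in>F. sm (c P) (P x))"
    using assms(1) unfolding lin_comb_of_def by blast
  have "sm a (A x) = (\<Sum>P\<in>F. sm (a * c P) (P x))" for x
    using 1(3) by (simp add: sm_sum sm_sm)
  then show ?thesis unfolding lin_comb_of_def using 1
    by (intro exI[of _ F] exI[of _ "\<lambda>P. a * c P"]) auto
qed

lemma vN_facts:
  assumes "von_neumann_algebra sm ip M"
  shows "\<And>T. T \<in> M \<Longrightarrow> bounded_op sm ip T" "id \<in> M"
    "\<And>A B. A \<in> M \<Longrightarrow> B \<in> M \<Longrightarrow> (\<lambda>x. A x + B x) \<in> M"
    "\<And>a A. A \<in> M \<Longrightarrow> (\<lambda>x. sm a (A x)) \<in> M"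
    "\<And>A B. A \<in> M \<Longrightarrow> B \<in> M \<Longrightarrow> A \<circ> B \<in> M"
    "\<And>A. A \<in> M \<Longrightarrow> \<exists>S\<in>M. is_adjoint ip A S"
    "commutant sm ip (commutant sm ip M) = M"
  using assms unfolding von_neumann_algebra_def by auto

lemma id_proj: "von_neumann_algebra sm ip M \<Longrightarrow> id \<in> projections_of ip M"
  using vN_facts(2) by (auto simp: projections_of_def is_adjoint_def)

lemma sa_span:
  assumes vN: "von_neumann_algebra sm ip M" and HM: "H \<in> M" and sa: "is_adjoint ip H H"
    and hyp: "\<forall>A\<in>M. positive_op ip A \<and> invertible_op sm ip A \<longrightarrow>
                 lin_comb_of sm (projections_of ip M) A"
  shows "lin_comb_of sm (projections_of ip M) H"
proof -
  have bH: "bounded_op sm ip H" using vN_facts(1)[OF vN HM] .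
  have lH: "lin H" using bH by (rule bounded_lin)
  obtain K where K: "K \<ge> 0" "\<And>x. cnorm ip (H x) \<le> K * cnorm ip x"
    using bounded_K[OF bH] by blast
  define c where "c = K + 1"
  have c: "c > 0" "c \<noteq> 0" using K(1) by (auto simp: c_def)
  define L where "L x = sm (complex_of_real (-1/c)) (H x)" for x
  have lL: "lin L" unfolding L_def
    by (rule linI) (simp_all add: lin_add[OF lH] lin_sm[OF lH] sm_add sm_sm mult.commute)
  have bL: "cnorm ip (L x) \<le> (K / c) * cnorm ip x" for x
  proof -
    have "cnorm ip (L x) = (1 / c) * cnorm ip (H x)"
      using c by (simp add: L_def cnorm_sm norm_divide)
    also have "\<dots> \<le> (1 / c) * (K * cnorm ip x)"
      using K(2) c by (intro mult_left_mono) auto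
    finally show ?thesis by simp
  qed
  obtain S where S: "bounded_op sm ip S" "\<And>x. S x - L (S x) = x" "\<And>x. S (x - L x) = x"
    using neumann[OF lL bL] c K(1) by (auto simp: c_def)
  have lS: "lin S" using S(1) by (rule bounded_lin)
  define A where "A x = sm (complex_of_real c) x + H x" for x
  have AL: "A x = sm (complex_of_real c) (x - L x)" for x
  proof -
    have "sm (complex_of_real c) (L x) = sm (-1) (H x)"
      using c by (simp add: L_def sm_sm)
    then show ?thesis by (simp add: A_def sm_diff sm_lminus)
  qed
  have AM: "A \<in> M"
  proof -
    have "(\<lambda>x. sm (complex_of_real c) (id x)) \<in> M" using vN_facts(2,4)[OF vN] by blast
    then have "(\<lambda>x. (\<lambda>x. sm (complex_of_real c) (id x)) x + H x) \<in> M"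
      using vN_facts(3)[OF vN] HM by blast
    then show ?thesis by (simp add: A_def[abs_def])
  qed
  have Apos: "positive_op ip A"
    unfolding positive_op_def
  proof
    fix x
    define w where "w = ip x (H x)"
    have wc: "cnj w = w" using sa unfolding is_adjoint_def w_def
      by (metis ip_cnj)
    then have wIm: "Im w = 0" by (metis cnj.sel(2) neg_equal_zero)
    have e: "ip x (A x) = complex_of_real c * ip x x + w"
      by (simp add: A_def ip_add ip_sm w_def)
    have "cmod w \<le> cnorm ip x * (K * cnorm ip x)"
      unfolding w_def using cauchy_schwarz[of x "H x"] K(2)[of x]
      by (meson cnorm_nonneg mult_left_mono order_trans)
    then have "- Re w \<le> K * (cnorm ip x)^2"
      using abs_Re_le_cmod[of w] by (simp add: power2_eq_square algebra_simps)
    moreover have "Re (ip x x) = (cnorm ip x)^2" by (simp add: cnorm_sq)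
    ultimately have "Re (ip x (A x)) \<ge> (cnorm ip x)^2"
      unfolding e by (simp add: c_def algebra_simps)
    moreover have "Im (ip x (A x)) = 0" unfolding e using wIm ip_self_Im[of x] by simp
    ultimately show "Im (ip x (A x)) = 0 \<and> 0 \<le> Re (ip x (A x))"
      using zero_le_power2[of "cnorm ip x"] by linarith
  qed
  define S' where "S' x = sm (complex_of_real (1 / c)) (S x)" for x
  have bS': "bounded_op sm ip S'"
  proof -
    obtain KS where KS: "KS \<ge> 0" "\<And>x. cnorm ip (S x) \<le> KS * cnorm ip x"
      using bounded_K[OF S(1)] by blast
    have "lin S'" unfolding S'_def
      by (rule linI) (simp_all add: lin_add[OF lS] lin_sm[OF lS] sm_add sm_sm mult.commute)
    moreover have "cnorm ip (S' x) \<le> (1 / c * KS) * cnorm ip x" for x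
      using KS(2)[of x] c by (simp add: S'_def cnorm_sm norm_divide divide_right_mono)
    ultimately show ?thesis by (rule bounded_opI)
  qed
  have "S' \<circ> A = id"
  proof
    fix x
    have "S' (A x) = sm (complex_of_real (1 / c)) (sm (complex_of_real c) (S (x - L x)))"
      by (simp add: S'_def AL lin_sm[OF lS])
    also have "\<dots> = x" using c by (simp add: S(3) sm_sm)
    finally show "(S' \<circ> A) x = id x" by simp
  qed
  moreover have "A \<circ> S' = id"
  proof
    fix x
    have "S' x - L (S' x) = sm (complex_of_real (1 / c)) (S x - L (S x))"
      by (simp add: S'_def lin_sm[OF lL] sm_diff)
    then have "A (S' x) = sm (complex_of_real c) (sm (complex_of_real (1 / c)) x)"
      by (simp add: AL S(2))
    also have "\<dots> = x" using c by (simp add: sm_sm)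
    finally show "(A \<circ> S') x = id x" by simp
  qed
  ultimately have "invertible_op sm ip A" using bS' unfolding invertible_op_def by blast
  with hyp AM Apos have lcA: "lin_comb_of sm (projections_of ip M) A" by blast
  have "lin_comb_of sm (projections_of ip M) (\<lambda>x. A x + sm (- complex_of_real c) (id x))"
    by (intro lc_add lcA lc_sm lc_mem id_proj vN)
  then show ?thesis
    by (rule lc_ext) (simp add: A_def sm_lminus)
qed


lemma all_span:
  assumes vN: "von_neumann_algebra sm ip M" and TM: "T \<in> M"
    and hyp: "\<forall>A\<in>M. positive_op ip A \<and> invertible_op sm ip A \<longrightarrow>
                 lin_comb_of sm (projections_of ip M) A"
  shows "lin_comb_of sm (projections_of ip M) T"
proof -
  obtain S where SM: "S \<in> M" and adj: "is_adjoint ip T S" using vN_facts(6)[OF vN TM] by blast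
  have a1: "ip (T x) y = ip x (S y)" for x y using adj by (simp add: is_adjoint_def)
  have a2: "ip (S x) y = ip x (T y)" for x y
    by (metis a1 ip_cnj)
  define H1 where "H1 x = sm (1/2) (T x + S x)" for x
  define H2 where "H2 x = sm (- \<i>/2) (T x + sm (-1) (S x))" for x
  have H1M: "H1 \<in> M"
  proof -
    have "(\<lambda>x. T x + S x) \<in> M" using vN_facts(3)[OF vN TM SM] .
    then have "(\<lambda>x. sm (1/2) ((\<lambda>x. T x + S x) x)) \<in> M" using vN_facts(4)[OF vN] by blast
    then show ?thesis by (simp add: H1_def[abs_def])
  qed
  have H2M: "H2 \<in> M"
  proof -
    have "(\<lambda>x. sm (-1) (S x)) \<in> M" using vN_facts(4)[OF vN SM] .
    then have "(\<lambda>x. T x + (\<lambda>x. sm (-1) (S x)) x) \<in> M" using vN_facts(3)[OF vN TM] by blast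
    then have "(\<lambda>x. sm (- \<i>/2) ((\<lambda>x. T x + (\<lambda>x. sm (-1) (S x)) x) x)) \<in> M"
      using vN_facts(4)[OF vN] by blast
    then show ?thesis by (simp add: H2_def[abs_def])
  qed
  have sa1: "is_adjoint ip H1 H1"
    unfolding is_adjoint_def H1_def
    by (simp add: ip_sm_left ip_add_left ip_add ip_sm a1 a2 algebra_simps)
  have sa2: "is_adjoint ip H2 H2"
    unfolding is_adjoint_def H2_def
    by (simp add: ip_sm_left ip_add_left ip_add ip_sm a1 a2 algebra_simps)
  have l1: "lin_comb_of sm (projections_of ip M) H1" by (rule sa_span[OF vN H1M sa1 hyp])
  have l2: "lin_comb_of sm (projections_of ip M) H2" by (rule sa_span[OF vN H2M sa2 hyp])
  have "lin_comb_of sm (projections_of ip M) (\<lambda>x. H1 x + sm \<i> (H2 x))"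
    by (intro lc_add l1 lc_sm l2)
  then show ?thesis
  proof (rule lc_ext)
    fix x
    have "sm \<i> (H2 x) = sm (1/2) (T x + sm (-1) (S x))"
      by (simp add: H2_def sm_sm)
    then have "H1 x + sm \<i> (H2 x) = sm (1/2) (T x + S x + (T x + sm (-1) (S x)))"
      by (simp add: H1_def sm_add)
    also have "T x + S x + (T x + sm (-1) (S x)) = sm 2 (T x)"
      using sm_ladd[of 1 1 "T x"] by (simp add: sm_lminus)
    also have "sm (1/2) (sm 2 (T x)) = T x" by (simp add: sm_sm)
    finally show "T x = H1 x + sm \<i> (H2 x)" by simp
  qed
qed

end

locale vna = chs +
  fixes M
  assumes vN: "von_neumann_algebra sm ip M" and ab: "abelian_algebra M"
begin

abbreviation "Pr \<equiv> projections_of ip M"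

lemma comm: "A \<in> M \<Longrightarrow> B \<in> M \<Longrightarrow> A (B x) = B (A x)"
  using ab unfolding abelian_algebra_def by (metis comp_apply)

lemma pr_M: "P \<in> Pr \<Longrightarrow> P \<in> M" by (simp add: projections_of_def)
lemma pr_idem: "P \<in> Pr \<Longrightarrow> P (P x) = P x"
  by (simp add: projections_of_def) (metis comp_apply)
lemma pr_adj: "P \<in> Pr \<Longrightarrow> ip (P x) y = ip x (P y)"
  by (simp add: projections_of_def is_adjoint_def)
lemma pr_bounded: "P \<in> Pr \<Longrightarrow> bounded_op sm ip P"
  using vN_facts(1)[OF vN] pr_M by blast
lemma pr_lin: "P \<in> Pr \<Longrightarrow> lin P"
  using pr_bounded bounded_lin by blast

lemma pr_norm: assumes "P \<in> Pr" shows "cnorm ip (P x) \<le> cnorm ip x"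
proof -
  have "(cnorm ip (P x))^2 = Re (ip x (P x))"
    using pr_adj[OF assms, of x "P x"] pr_idem[OF assms] by (simp add: cnorm_sq)
  also have "\<dots> \<le> cmod (ip x (P x))" by (rule complex_Re_le_cmod)
  also have "\<dots> \<le> cnorm ip x * cnorm ip (P x)" by (rule cauchy_schwarz)
  finally have h: "cnorm ip (P x) * cnorm ip (P x) \<le> cnorm ip x * cnorm ip (P x)"
    by (simp add: power2_eq_square)
  show ?thesis
  proof (cases "cnorm ip (P x) = 0")
    case False
    then have "cnorm ip (P x) > 0" using cnorm_nonneg[of "P x"] by linarith
    then show ?thesis using h by simp
  qed simp
qed

lemma pr_mult: assumes "P \<in> Pr" "Q \<in> Pr" shows "P \<circ> Q \<in> Pr"
proof -
  have "P \<circ> Q \<in> M" using vN_facts(5)[OF vN] pr_M assms by blast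
  moreover have "(P \<circ> Q) \<circ> (P \<circ> Q) = P \<circ> Q"
  proof
    fix x
    have "P (Q (P (Q x))) = P (P (Q (Q x)))" using comm[OF pr_M[OF assms(2)] pr_M[OF assms(1)]] by metis
    then show "((P \<circ> Q) \<circ> (P \<circ> Q)) x = (P \<circ> Q) x" by (simp add: pr_idem assms)
  qed
  moreover have "is_adjoint ip (P \<circ> Q) (P \<circ> Q)"
    unfolding is_adjoint_def
    using pr_adj[OF assms(1)] pr_adj[OF assms(2)] comm[OF pr_M[OF assms(1)] pr_M[OF assms(2)]]
    by simp
  ultimately show ?thesis by (simp add: projections_of_def)
qed

definition down :: "('a \<Rightarrow> 'a) \<Rightarrow> ('a \<Rightarrow> 'a) set" where
  "down E = {R \<in> Pr. R \<circ> E = R}"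

lemma down_app: "R \<in> down E \<Longrightarrow> R (E x) = R x"
  by (simp add: down_def) (metis comp_apply)

lemma pr_compl: assumes "E \<in> Pr" "P \<in> down E" shows "(\<lambda>x. E x - P x) \<in> down E"
proof -
  have P: "P \<in> Pr" using assms(2) by (simp add: down_def)
  have PE: "P (E x) = P x" for x using down_app[OF assms(2)] .
  have EP: "E (P x) = P x" for x using PE comm[OF pr_M[OF assms(1)] pr_M[OF P]] by metis
  have lE: "lin E" and lP: "lin P" using pr_lin assms(1) P by auto
  have "(\<lambda>x. E x + (\<lambda>x. sm (-1) (P x)) x) \<in> M"
    using vN_facts(3,4)[OF vN] pr_M assms(1) P by blast
  moreover have "(\<lambda>x. E x + (\<lambda>x. sm (-1) (P x)) x) = (\<lambda>x. E x - P x)"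
    by (simp add: sm_lminus)
  ultimately have "(\<lambda>x. E x - P x) \<in> M" by simp
  moreover have "(\<lambda>x. E x - P x) \<circ> (\<lambda>x. E x - P x) = (\<lambda>x. E x - P x)"
    by (rule ext) (simp add: lin_diff[OF lE] lin_diff[OF lP] pr_idem assms(1) P PE EP)
  moreover have "is_adjoint ip (\<lambda>x. E x - P x) (\<lambda>x. E x - P x)"
    unfolding is_adjoint_def
    by (simp add: ip_diff ip_diff_left pr_adj[OF assms(1)] pr_adj[OF P])
  moreover have "(\<lambda>x. E x - P x) \<circ> E = (\<lambda>x. E x - P x)"
    by (rule ext) (simp add: pr_idem assms(1) PE)
  ultimately show ?thesis by (simp add: down_def projections_of_def)
qed

lemma down_step:
  assumes E: "E \<in> Pr" and inf: "infinite (down E)"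
  shows "\<exists>E'. E' \<in> down E \<and> E' \<noteq> E \<and> infinite (down E')"
proof -
  have "infinite (down E - {E, (\<lambda>x. 0)})" using inf by simp
  then obtain P where P: "P \<in> down E" "P \<noteq> E" "P \<noteq> (\<lambda>x. 0)"
    by (metis Diff_iff ex_in_conv finite.emptyI insertCI)
  define Q where "Q x = E x - P x" for x
  have Q: "Q \<in> down E" using pr_compl[OF E P(1)] by (simp add: Q_def[abs_def])
  have PP: "P \<in> Pr" and QP: "Q \<in> Pr" using P(1) Q by (auto simp: down_def)
  have QE: "Q \<noteq> E"
  proof
    assume "Q = E"
    then have "P x = 0" for x using fun_cong[of Q E x] Q_def[of x] by simp
    then show False using P(3) by auto
  qed
  have "infinite (down P) \<or> infinite (down Q)"
  proof (rule ccontr)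
    assume "\<not> ?thesis"
    then have fin: "finite (down P \<times> down Q)" by simp
    define f where "f R = (R \<circ> P, R \<circ> Q)" for R :: "'a \<Rightarrow> 'a"
    have "f ` down E \<subseteq> down P \<times> down Q"
    proof
      fix y assume "y \<in> f ` down E"
      then obtain R where R: "R \<in> down E" "y = f R" by blast
      have RP: "R \<in> Pr" using R(1) by (simp add: down_def)
      have "R \<circ> P \<in> Pr" "R \<circ> Q \<in> Pr" using pr_mult RP PP QP by auto
      moreover have "(R \<circ> P) \<circ> P = R \<circ> P" "(R \<circ> Q) \<circ> Q = R \<circ> Q"
        by (auto simp: pr_idem PP QP)
      ultimately show "y \<in> down P \<times> down Q" using R(2) by (simp add: f_def down_def)
    qed
    moreover have "inj_on f (down E)"
    proof
      fix R1 R2 assume R: "R1 \<in> down E" "R2 \<in> down E" "f R1 = f R2"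
      then have e: "R1 \<circ> P = R2 \<circ> P" "R1 \<circ> Q = R2 \<circ> Q" by (auto simp: f_def)
      have l1: "lin R1" and l2: "lin R2" using R(1,2) pr_lin by (auto simp: down_def)
      show "R1 = R2"
      proof
        fix x
        have "E x = P x + Q x" by (simp add: Q_def)
        then have "R1 x = R1 (P x) + R1 (Q x)" "R2 x = R2 (P x) + R2 (Q x)"
          using down_app[OF R(1), of x] down_app[OF R(2), of x] lin_add[OF l1] lin_add[OF l2]
          by metis+
        then show "R1 x = R2 x" using fun_cong[OF e(1), of x] fun_cong[OF e(2), of x] by simp
      qed
    qed
    ultimately have "finite (down E)" using fin inj_on_finite by blast
    then show False using inf by simp
  qed
  then show ?thesis using P Q QE by blast
qed


lemma chain_exists:
  assumes inf: "infinite Pr"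
  shows "\<exists>E. (\<forall>n. E n \<in> Pr) \<and> (\<forall>n. E (Suc n) \<noteq> E n) \<and> (\<forall>i j x. E i (E j x) = E (max i j) x)"
proof -
  define step where "step F = (SOME E'. E' \<in> down F \<and> E' \<noteq> F \<and> infinite (down E'))" for F
  define ch where "ch n = (step ^^ n) id" for n
  have chS: "ch (Suc n) = step (ch n)" for n by (simp add: ch_def)
  have inv: "ch n \<in> Pr \<and> infinite (down (ch n))" for n
  proof (induction n)
    case 0
    have "down id = Pr" by (auto simp: down_def)
    moreover have "ch 0 = id" by (simp add: ch_def)
    ultimately show ?case using id_proj[OF vN] inf by metis
  next
    case (Suc n)
    have "ch (Suc n) \<in> down (ch n) \<and> ch (Suc n) \<noteq> ch n \<and> infinite (down (ch (Suc n)))"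
    proof -
      have ex: "\<exists>E'. E' \<in> down (ch n) \<and> E' \<noteq> ch n \<and> infinite (down E')"
        using down_step Suc by blast
      show ?thesis unfolding chS step_def by (rule someI_ex[OF ex])
    qed
    then show ?case by (simp add: down_def)
  qed
  have st: "ch (Suc n) \<in> down (ch n) \<and> ch (Suc n) \<noteq> ch n" for n
  proof -
    have "ch (Suc n) \<in> down (ch n) \<and> ch (Suc n) \<noteq> ch n \<and> infinite (down (ch (Suc n)))"
    proof -
      have ex: "\<exists>E'. E' \<in> down (ch n) \<and> E' \<noteq> ch n \<and> infinite (down E')"
        using down_step inv by blast
      show ?thesis unfolding chS step_def by (rule someI_ex[OF ex])
    qed
    then show ?thesis by simp
  qed
  have s2: "ch n (ch (Suc n) x) = ch (Suc n) x" for n x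
    using down_app[OF conjunct1[OF st[of n]], of x] comm[OF pr_M pr_M] inv by metis
  have le: "ch i (ch j x) = ch j x" if "i \<le> j" for i j x
    using that
  proof (induction j arbitrary: x rule: dec_induct)
    case base then show ?case using pr_idem inv by blast
  next
    case (step j)
    have "ch i (ch (Suc j) x) = ch i (ch j (ch (Suc j) x))" by (simp add: s2)
    also have "\<dots> = ch j (ch (Suc j) x)" using step.IH by simp
    also have "\<dots> = ch (Suc j) x" by (simp add: s2)
    finally show ?case .
  qed
  have "ch i (ch j x) = ch (max i j) x" for i j x
  proof (cases "i \<le> j")
    case True then show ?thesis using le by (simp add: max_def)
  next
    case False
    then have "ch i (ch j x) = ch j (ch i x)" using comm[OF pr_M pr_M] inv by metis
    also have "\<dots> = ch i x" using le False by simp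
    finally show ?thesis using False by (simp add: max_def)
  qed
  then show ?thesis using inv st by blast
qed

lemma refine:
  assumes "finite F"
  shows "F \<subseteq> Pr \<Longrightarrow> (\<forall>Q\<in>F. \<forall>y. \<Phi> y \<longrightarrow> \<Phi> (Q y) \<and> \<Phi> (y - Q y)) \<Longrightarrow> \<Phi> y \<Longrightarrow> y \<noteq> 0 \<Longrightarrow>
    \<exists>z. z \<noteq> 0 \<and> \<Phi> z \<and> (\<forall>Q\<in>F. Q z = 0 \<or> Q z = z)"
  using assms
proof (induction F arbitrary: \<Phi> y rule: finite_induct)
  case empty then show ?case by blast
next
  case (insert Q F)
  have QP: "Q \<in> Pr" using insert.prems(1) by simp
  have lQ: "lin Q" using pr_lin QP by blast
  define b where "b = (Q y \<noteq> 0)"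
  define y' where "y' = (if b then Q y else y - Q y)"
  have y'0: "y' \<noteq> 0" using insert.prems(4) by (auto simp: y'_def b_def)
  have Py': "\<Phi> y'" using insert.prems(2,3) by (auto simp: y'_def)
  define \<Psi> where "\<Psi> u = (\<Phi> u \<and> Q u = (if b then u else 0))" for u
  have Qy': "\<Psi> y'" using Py' by (auto simp: \<Psi>_def y'_def pr_idem[OF QP] lin_diff[OF lQ])
  have cl: "\<forall>Q'\<in>F. \<forall>u. \<Psi> u \<longrightarrow> \<Psi> (Q' u) \<and> \<Psi> (u - Q' u)"
  proof (intro ballI allI impI)
    fix Q' u assume Q': "Q' \<in> F" and u: "\<Psi> u"
    have Q'P: "Q' \<in> Pr" using Q' insert.prems(1) by auto
    have lQ': "lin Q'" using pr_lin Q'P by blast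
    have c: "Q (Q' u) = Q' (Q u)" using comm[OF pr_M[OF QP] pr_M[OF Q'P]] .
    show "\<Psi> (Q' u) \<and> \<Psi> (u - Q' u)"
      using u insert.prems(2) Q' unfolding \<Psi>_def
      by (auto simp: c lin_diff[OF lQ] lin_zero[OF lQ'])
  qed
  obtain z where z: "z \<noteq> 0" "\<Psi> z" "\<forall>Q\<in>F. Q z = 0 \<or> Q z = z"
    using insert.IH[of \<Psi> y'] insert.prems(1) cl Qy' y'0 by auto
  then show ?case unfolding \<Psi>_def by (intro exI[of _ z]) (auto split: if_splits)
qed

lemma no_span_all:
  assumes EP: "\<forall>n. E n \<in> Pr" and Ene: "\<forall>n. E (Suc n) \<noteq> E n"
    and Em: "\<forall>i j x. E i (E j x) = E (max i j) x"
  shows "\<exists>A\<in>M. \<not> lin_comb_of sm Pr A"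
proof -
  have lE: "lin (E n)" for n using pr_lin EP by blast
  define D where "D n x = E n x - E (Suc n) x" for n x
  have lD: "lin (D n)" for n
    by (rule linI) (simp_all add: D_def lin_add[OF lE] lin_sm[OF lE] sm_add sm_diff)
  define c :: "nat \<Rightarrow> complex" where "c n = complex_of_real (1 / 2 ^ n)" for n
  define U where "U k x = sm (c k) (D k x)" for k x
  have lU: "lin (U k)" for k
    by (rule linI) (simp_all add: U_def lin_add[OF lD] lin_sm[OF lD] sm_add sm_sm mult.commute)
  have bU: "cnorm ip (U k x) \<le> (2 * (1/2) ^ k) * cnorm ip x" for k x
  proof -
    have "cnorm ip (D k x) \<le> cnorm ip (E k x) + cnorm ip (E (Suc k) x)"
      using cnorm_triangle[of "E k x" "- E (Suc k) x"] cnorm_minus[of "E (Suc k) x"]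
      by (simp add: D_def)
    also have "\<dots> \<le> 2 * cnorm ip x" using pr_norm EP by (smt (verit))
    finally have "cnorm ip (D k x) \<le> 2 * cnorm ip x" .
    then have "(1/2) ^ k * cnorm ip (D k x) \<le> (1/2) ^ k * (2 * cnorm ip x)"
      by (intro mult_left_mono) auto
    then show ?thesis by (simp add: U_def c_def cnorm_sm power_one_over norm_divide norm_power)
  qed
  have sa: "summable (\<lambda>k. 2 * (1/2::real) ^ k)"
    by (intro summable_mult summable_geometric) simp
  obtain A where A: "bounded_op sm ip A" "\<forall>x. conv (\<lambda>n. \<Sum>k<n. U k x) (A x)"
    using series[of U "\<lambda>k. 2 * (1/2) ^ k"] lU bU sa by auto
  have AM: "A \<in> M"
  proof -
    have "A \<in> commutant sm ip (commutant sm ip M)"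
      unfolding commutant_def
    proof (intro CollectI conjI ballI A(1))
      fix T assume T: "T \<in> {T. bounded_op sm ip T \<and> (\<forall>A\<in>M. T \<circ> A = A \<circ> T)}"
      then have bT: "bounded_op sm ip T" and cT: "\<forall>B\<in>M. T \<circ> B = B \<circ> T" by auto
      have lT: "lin T" using bT by (rule bounded_lin)
      have TE: "T (E k y) = E k (T y)" for k y using cT pr_M EP by (metis comp_apply)
      have TU: "T (U k y) = U k (T y)" for k y
        by (simp add: U_def D_def lin_sm[OF lT] lin_diff[OF lT] TE)
      show "A \<circ> T = T \<circ> A"
      proof
        fix x
        have "conv (\<lambda>n. T (\<Sum>k<n. U k x)) (T (A x))" using conv_op[OF bT] A(2) by blast
        moreover have "(\<lambda>n. T (\<Sum>k<n. U k x)) = (\<lambda>n. \<Sum>k<n. U k (T x))"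
          by (simp add: lin_sum[OF lT] TU)
        ultimately have "T (A x) = A (T x)" using A(2) conv_unique by metis
        then show "(A \<circ> T) x = (T \<circ> A) x" by simp
      qed
    qed
    then show ?thesis using vN_facts(7)[OF vN] by simp
  qed
  have DQ: "D m (Q y) = Q (D m y)" if "Q \<in> Pr" for Q m y
  proof -
    have lQ: "lin Q" using pr_lin that by blast
    show ?thesis using comm[OF pr_M[OF that] pr_M, of "E m"] comm[OF pr_M[OF that] pr_M, of "E (Suc m)"] EP
      by (simp add: D_def lin_diff[OF lQ])
  qed
  define \<Phi> where "\<Phi> n y = (D n y = y \<and> (\<forall>m. m \<noteq> n \<longrightarrow> D m y = 0))" for n y
  have eig: "A z = sm (c n) z" if "\<Phi> n z" for n z
  proof -
    have "(\<Sum>k<N. U k z) = sm (c n) z" if "N \<ge> Suc n" for N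
    proof -
      have "(\<Sum>k<N. U k z) = (\<Sum>k<N. if k = n then sm (c n) z else 0)"
        using \<open>\<Phi> n z\<close> by (intro sum.cong) (auto simp: U_def \<Phi>_def)
      also have "\<dots> = sm (c n) z" using that by (simp add: sum.delta)
      finally show ?thesis .
    qed
    then have "conv (\<lambda>N. \<Sum>k<N. U k z) (sm (c n) z)"
      by (intro conv_cong_ev[OF conv_const, where N="Suc n"]) auto
    then show ?thesis using A(2) conv_unique by metis
  qed
  have exz: "\<exists>y. y \<noteq> 0 \<and> \<Phi> n y" for n
  proof -
    obtain w where w: "E n w \<noteq> E (Suc n) w" using Ene by (metis ext)
    define y where "y = D n w"
    have "y \<noteq> 0" using w by (simp add: y_def D_def)
    moreover have "\<Phi> n y"
      unfolding \<Phi>_def y_def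
    proof (intro conjI allI impI)
      show "D n (D n w) = D n w"
        by (simp add: D_def lin_diff[OF lE] Em max_def)
      fix m assume "m \<noteq> n"
      then show "D m (D n w) = 0"
        by (cases "m < n") (auto simp: D_def lin_diff[OF lE] Em max_def le_Suc_eq)
    qed
    ultimately show ?thesis by blast
  qed
  show ?thesis
  proof (rule bexI[OF _ AM], rule notI)
    assume "lin_comb_of sm Pr A"
    then obtain F d where F: "finite F" "F \<subseteq> Pr" "A = (\<lambda>x. \<Sum>P\<in>F. sm (d P) (P x))"
      unfolding lin_comb_of_def by blast
    define V where "V = (\<lambda>G. sum d G) ` Pow F"
    have finV: "finite V" using F(1) by (simp add: V_def)
    have "c n \<in> V" for n
    proof -
      obtain y where y: "y \<noteq> 0" "\<Phi> n y" using exz by blast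
      have cl: "\<forall>Q\<in>F. \<forall>y. \<Phi> n y \<longrightarrow> \<Phi> n (Q y) \<and> \<Phi> n (y - Q y)"
      proof (intro ballI allI impI)
        fix Q u assume Q: "Q \<in> F" and u: "\<Phi> n u"
        have QP: "Q \<in> Pr" using Q F(2) by auto
        have lQ: "lin Q" using pr_lin QP by blast
        show "\<Phi> n (Q u) \<and> \<Phi> n (u - Q u)"
          using u unfolding \<Phi>_def by (simp add: DQ[OF QP] lin_diff[OF lD] lin_zero[OF lQ])
      qed
      obtain z where z: "z \<noteq> 0" "\<Phi> n z" "\<forall>Q\<in>F. Q z = 0 \<or> Q z = z"
        using refine[OF F(1) F(2) cl y(2) y(1)] by blast
      define s where "s = sum d {Q\<in>F. Q z = z}"
      have sV: "s \<in> V" unfolding V_def s_def by auto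
      have "A z = (\<Sum>Q\<in>F. sm (if Q z = z then d Q else 0) z)"
        using z(3) by (simp add: F(3)) (intro sum.cong refl, auto)
      also have "\<dots> = sm s z"
        by (simp add: sm_lsum[symmetric] s_def sum.inter_filter[OF F(1)])
      finally have "sm (c n) z = sm s z" using eig[OF z(2)] by simp
      then have "sm (c n - s) z = 0" by (simp add: sm_ldiff)
      then have "cmod (c n - s) * cnorm ip z = 0" by (metis cnorm_sm cnorm_zero)
      then have "c n = s" using z(1) by simp
      then show ?thesis using sV by simp
    qed
    then have "range c \<subseteq> V" by blast
    then have "finite (range c)" using finV finite_subset by blast
    moreover have "inj c"
    proof
      fix m n assume "c m = c n"
      then have "(1::real) / 2 ^ m = 1 / 2 ^ n" by (simp only: c_def of_real_eq_iff)
      then have "(2::real) ^ m = 2 ^ n" by (simp add: field_simps)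
      then show "m = n" using power_inject_exp[of "2::real" m n] by simp
    qed
    ultimately have "finite (UNIV :: nat set)" using finite_imageD by blast
    then show False by simp
  qed
qed

end

theorem lemma2p1:
  fixes sm :: "complex \<Rightarrow> 'a::ab_group_add \<Rightarrow> 'a"
    and ip :: "'a \<Rightarrow> 'a \<Rightarrow> complex"
    and M :: "('a \<Rightarrow> 'a) set"
  assumes "complex_hilbert_space sm ip"
    and "von_neumann_algebra sm ip M"
    and "abelian_algebra M"
    and "infinite_dimensional sm M"
  shows "\<exists>A\<in>M. positive_op ip A \<and> invertible_op sm ip A \<and>
           \<not> lin_comb_of sm (projections_of ip M) A"
proof (rule ccontr)
  interpret V: vna sm ip M using assms(1-3) by (simp add: vna_def vna_axioms_def chs_def)
  assume "\<not> ?thesis"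
  then have hyp: "\<forall>A\<in>M. positive_op ip A \<and> invertible_op sm ip A \<longrightarrow>
                 lin_comb_of sm (projections_of ip M) A" by blast
  have all: "\<forall>T\<in>M. lin_comb_of sm (projections_of ip M) T"
    using V.all_span[OF assms(2) _ hyp] by blast
  show False
  proof (cases "finite (projections_of ip M)")
    case True
    have "projections_of ip M \<subseteq> M" by (auto simp: projections_of_def)
    then show False using assms(4) True all unfolding infinite_dimensional_def by blast
  next
    case False
    then obtain E where "\<forall>n. E n \<in> projections_of ip M" "\<forall>n. E (Suc n) \<noteq> E n"
      "\<forall>i j x. E i (E j x) = E (max i j) x"
      using V.chain_exists by blast
    then show False using V.no_span_all all by blast
  qed
qed

end
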